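(* Assume the standing setting and that $\|R\|\rho^a<1$. Let $\vartheta:=-\lambda/|\lambda|$ and $\delta\in\,]0,\arccos(\|R\|\rho^a)[$. Then: (i) for every $p_0=(z_0,w_0)\in\tilde{\mathcal U}$, the searchlight beam $S(z_0,\vartheta,\delta)$ is a stability beam for $p_0$; (ii) for every integral curve of $\mathcal E^*X_R$ of the form $t\mapsto(z_0+t\theta,w(t))$ with $t\ge0$, $\theta\in\mathbb S^1$, $w(0)=w_0$, staying in $\tilde{\mathcal U}$, the following estimates hold. If $\operatorname{Re}\theta\neq0$, $$\Big|w(t)-w_0-t\frac\theta\lambda\Big|\le\frac{e^{a\operatorname{Re}z_0}}{|\lambda\operatorname{Re}\theta|\,a}\,\|R\|\,\big|1-e^{at\operatorname{Re}\theta}\big|,$$ and if $\operatorname{Re}\theta=0$, $$\Big|w(t)-w_0-t\frac\theta\lambda\Big|\le\frac{e^{a\operatorname{Re}z_0}}{|\lambda|}\,t\,\|R\|.$$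
   Context: Standing setting: $\lambda\in\mathbb C\setminus\{0\}$, $a$ is a positive integer, $R\in x^a\mathbb C\{x,y\}$, and $X_R=\lambda x\partial_x+(1+R)y\partial_y$. The polydisc $\mathcal U=\rho\mathbb D\times r\mathbb D$ is one on which $R$ is holomorphic and bounded with $\sup_{\mathcal U}|R|<1$, and $\|R\|:=\sup_{\mathcal U}|R/x^a|$. Write $\mathcal E(z,w)=(e^z,e^w)$ and $\tilde{\mathcal U}=\{\operatorname{Re}z<\ln\rho,\ \operatorname{Re}w<\ln r\}$. The field $\mathcal E^*X_R=\lambda\partial_z+(1+R\circ\mathcal E)\partial_w$ defines the foliation $\tilde{\mathcal F}$; $\tilde{\mathcal L}_p$ is its leaf through $p$, and $\Pi(z,w)=z$. For $v$ with $\operatorname{Re}v<\ln\rho$, $0<\delta<\pi$ and $\vartheta\in\mathbb S^1$, the searchlight beam is $S(v,\vartheta,\delta):=\{z:\operatorname{Re}z<\ln\rho,\ |\arg(z-v)-\arg\vartheta|<\delta\}$. When $v=\Pi(p_0)$, it is called a stability beam (for $p_0$) if the following holds: for every $\theta\in\mathbb S^1$ with $|\arg(\theta/\vartheta)|<\delta$, the lift in $\tilde{\mathcal L}_{p_0}$, starting at $p_0$, of the ray $t\ge0\mapsto v+t\theta$ has a $w$-coordinate whose real part is decreasing in $t$. In particular the ray lifts entirely in $\tilde{\mathcal L}_{p_0}$ as long as it stays in $\{\operatorname{Re}z<\ln\rho\}$. *)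

theory Defs
  imports "HOL-Analysis.Analysis"
begin

definition polydisc :: "real \<Rightarrow> real \<Rightarrow> (complex \<times> complex) set" where
  "polydisc \<rho> r = ball 0 \<rho> \<times> ball 0 r"

definition holomorphic2 :: "(complex \<Rightarrow> complex \<Rightarrow> complex) \<Rightarrow> (complex \<times> complex) set \<Rightarrow> bool" where
  "holomorphic2 f S \<longleftrightarrow>
     (\<forall>p\<in>S. \<exists>A B. ((\<lambda>q. f (fst q) (snd q)) has_derivative
                      (\<lambda>h. A * fst h + B * snd h)) (at p))"

definition standing_setting ::
  "complex \<Rightarrow> nat \<Rightarrow> (complex \<Rightarrow> complex \<Rightarrow> complex) \<Rightarrow> real \<Rightarrow> real \<Rightarrow> bool" where
  "standing_setting lam a R \<rho> r \<longleftrightarrow>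
     lam \<noteq> 0 \<and> 0 < a \<and> 0 < \<rho> \<and> 0 < r \<and>
     holomorphic2 R (polydisc \<rho> r) \<and>
     (\<exists>G. holomorphic2 G (polydisc \<rho> r) \<and>
          (\<forall>(x, y)\<in>polydisc \<rho> r. R x y = x ^ a * G x y)) \<and>
     bdd_above ((\<lambda>(x, y). cmod (R x y)) ` polydisc \<rho> r) \<and>
     (SUP (x, y)\<in>polydisc \<rho> r. cmod (R x y)) < 1 \<and>
     bdd_above ((\<lambda>(x, y). cmod (R x y / x ^ a)) ` {(x, y)\<in>polydisc \<rho> r. x \<noteq> 0})"

definition normR :: "nat \<Rightarrow> (complex \<Rightarrow> complex \<Rightarrow> complex) \<Rightarrow> real \<Rightarrow> real \<Rightarrow> real" where
  "normR a R \<rho> r = (SUP (x, y)\<in>{(x, y)\<in>polydisc \<rho> r. x \<noteq> 0}. cmod (R x y / x ^ a))"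

definition Utilde :: "real \<Rightarrow> real \<Rightarrow> (complex \<times> complex) set" where
  "Utilde \<rho> r = {(z, w). Re z < ln \<rho> \<and> Re w < ln r}"

text \<open>w is a lift, on the parameter set I (containing 0), of the ray
  t \<mapsto> z0 + t theta to the leaf of the pulled-back foliation through (z0,w0):
  the curve t \<mapsto> (z0 + t theta, w t) stays in tilde U and is tangent to
  lam d/dz + (1 + R o E) d/dw, i.e. w' = theta/lam (1 + R(e^z, e^w)).\<close>
definition is_lift ::
  "complex \<Rightarrow> (complex \<Rightarrow> complex \<Rightarrow> complex) \<Rightarrow> real \<Rightarrow> real \<Rightarrow>
   complex \<Rightarrow> complex \<Rightarrow> complex \<Rightarrow> real set \<Rightarrow> (real \<Rightarrow> complex) \<Rightarrow> bool" where
  "is_lift lam R \<rho> r z0 w0 \<theta> I w \<longleftrightarrow>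
     0 \<in> I \<and> w 0 = w0 \<and>
     (\<forall>t\<in>I. (z0 + of_real t * \<theta>, w t) \<in> Utilde \<rho> r \<and>
        (w has_vector_derivative
           (\<theta> / lam * (1 + R (exp (z0 + of_real t * \<theta>)) (exp (w t))))) (at t within I))"

definition stability_beam ::
  "complex \<Rightarrow> (complex \<Rightarrow> complex \<Rightarrow> complex) \<Rightarrow> real \<Rightarrow> real \<Rightarrow>
   complex \<Rightarrow> complex \<Rightarrow> complex \<Rightarrow> real \<Rightarrow> bool" where
  "stability_beam lam R \<rho> r z0 w0 vt \<delta> \<longleftrightarrow>
     (\<forall>\<theta>. cmod \<theta> = 1 \<and> \<bar>Arg (\<theta> / vt)\<bar> < \<delta> \<longrightarrow>
        (let I = {t::real. 0 \<le> t \<and> Re (z0 + of_real t * \<theta>) < ln \<rho>} in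
          (\<exists>w. is_lift lam R \<rho> r z0 w0 \<theta> I w) \<and>
          (\<forall>J w. is_interval J \<and> J \<subseteq> I \<and> is_lift lam R \<rho> r z0 w0 \<theta> J w \<longrightarrow>
             (\<forall>s\<in>J. \<forall>t\<in>J. s < t \<longrightarrow> Re (w t) < Re (w s)))))"

end

theory Submission
  imports Defs "HOL-Library.Diagonal_Subsequence" "HOL-Library.Nat_Bijection"
begin


definition clamp :: "real \<Rightarrow> nat \<Rightarrow> real \<Rightarrow> real" where
  "clamp h k t = min h (max 0 (t - real k * h))"

lemma clamp_nonneg: "0 \<le> h \<Longrightarrow> 0 \<le> clamp h k t"
  by (simp add: clamp_def)

lemma clamp_mono: "a \<le> b \<Longrightarrow> clamp h k a \<le> clamp h k b"
  by (simp add: clamp_def)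

lemma clamp_diff_zero:
  assumes "a \<le> b" "\<not> (real k * h < b \<and> a < real k * h + h)" "0 \<le> h"
  shows "clamp h k b - clamp h k a = 0"
  using assms by (auto simp: clamp_def)

lemma sum_clamp: "0 \<le> h \<Longrightarrow> 0 \<le> t \<Longrightarrow> (\<Sum>k<N. clamp h k t) = min t (real N * h)"
proof (induction N)
  case 0 then show ?case by simp
next
  case (Suc N)
  then show ?case by (simp add: clamp_def algebra_simps)
qed

lemma clamp_node: "0 < h \<Longrightarrow> clamp h j (real k * h) = (if j < k then h else 0)"
proof -
  assume h: "0 < h"
  show ?thesis
  proof (cases "j < k")
    case True
    then have "real j + 1 \<le> real k" by simp
    then have "real j * h + h \<le> real k * h" using h
      by (metis distrib_right mult_1 mult_right_mono less_imp_le)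
    then show ?thesis using True h by (simp add: clamp_def)
  next
    case False
    then have "real k * h \<le> real j * h" using h by simp
    then show ?thesis using False h by (simp add: clamp_def)
  qed
qed

fun wseq :: "(real \<Rightarrow> complex \<Rightarrow> complex) \<Rightarrow> real \<Rightarrow> complex \<Rightarrow> nat \<Rightarrow> complex" where
  "wseq G h w0 0 = w0"
| "wseq G h w0 (Suc k) = wseq G h w0 k + of_real h * G (real k * h) (wseq G h w0 k)"

definition Pol :: "(real \<Rightarrow> complex \<Rightarrow> complex) \<Rightarrow> real \<Rightarrow> complex \<Rightarrow> nat \<Rightarrow> real \<Rightarrow> complex" where
  "Pol G h w0 N t = w0 + (\<Sum>k<N. of_real (clamp h k t) * G (real k * h) (wseq G h w0 k))"

lemma wseq_sum: "wseq G h w0 k = w0 + (\<Sum>j<k. of_real h * G (real j * h) (wseq G h w0 j))"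
  by (induction k) auto

lemma Pol_node:
  assumes "0 < h" "k \<le> N"
  shows "Pol G h w0 N (real k * h) = wseq G h w0 k"
proof -
  have "Pol G h w0 N (real k * h) = w0 + (\<Sum>j<N. (if j < k then of_real h * G (real j * h) (wseq G h w0 j) else 0))"
    unfolding Pol_def using assms(1) by (intro arg_cong2[where f="(+)"] sum.cong) (auto simp: clamp_node)
  also have "\<dots> = w0 + (\<Sum>j<k. of_real h * G (real j * h) (wseq G h w0 j))"
  proof -
    have "(\<Sum>j<N. (if j < k then of_real h * G (real j * h) (wseq G h w0 j) else 0))
        = (\<Sum>j<k. (if j < k then of_real h * G (real j * h) (wseq G h w0 j) else 0))"
      using assms(2) by (intro sum.mono_neutral_right) auto
    then show ?thesis by simp
  qed
  also have "\<dots> = wseq G h w0 k" by (rule wseq_sum[symmetric])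
  finally show ?thesis .
qed

lemma Pol_incr:
  "Pol G h w0 N b - Pol G h w0 N a = (\<Sum>k<N. of_real (clamp h k b - clamp h k a) * G (real k * h) (wseq G h w0 k))"
  unfolding Pol_def by (simp add: sum_subtractf[symmetric] algebra_simps)

lemma Pol_est:
  assumes h: "0 < h" and ab: "0 \<le> a" "a \<le> b" "b \<le> real N * h"
    and B: "\<And>k. k < N \<Longrightarrow> real k * h < b \<Longrightarrow> a < real k * h + h \<Longrightarrow>
               norm (G (real k * h) (wseq G h w0 k) - V) \<le> B"
  shows "norm (Pol G h w0 N b - Pol G h w0 N a - of_real (b - a) * V) \<le> (b - a) * B"
proof -
  let ?c = "\<lambda>k. clamp h k b - clamp h k a"
  let ?g = "\<lambda>k. G (real k * h) (wseq G h w0 k)"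
  have sc: "(\<Sum>k<N. ?c k) = b - a"
    using ab h by (simp add: sum_subtractf sum_clamp)
  have c0: "0 \<le> ?c k" for k using clamp_mono[OF ab(2)] by simp
  have "Pol G h w0 N b - Pol G h w0 N a - of_real (b - a) * V = (\<Sum>k<N. of_real (?c k) * (?g k - V))"
  proof -
    have e: "(\<Sum>k<N. of_real (?c k) * (?g k - V)) = (\<Sum>k<N. of_real (?c k) * ?g k) - of_real (\<Sum>k<N. ?c k) * V"
      by (simp add: right_diff_distrib left_diff_distrib sum_subtractf sum_distrib_right)
    have "Pol G h w0 N b - Pol G h w0 N a - of_real (b - a) * V = (\<Sum>k<N. of_real (?c k) * ?g k) - of_real (\<Sum>k<N. ?c k) * V"
      unfolding Pol_incr sc by simp
    then show ?thesis using e by simp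
  qed
  also have "norm \<dots> \<le> (\<Sum>k<N. norm (of_real (?c k) * (?g k - V)))"
    by (rule norm_sum)
  also have "\<dots> \<le> (\<Sum>k<N. ?c k * B)"
  proof (rule sum_mono)
    fix k assume k: "k \<in> {..<N}"
    show "norm (of_real (?c k) * (?g k - V)) \<le> ?c k * B"
    proof (cases "real k * h < b \<and> a < real k * h + h")
      case True
      have "norm (of_real (?c k) * (?g k - V)) = ?c k * norm (?g k - V)"
        using c0[of k] by (simp add: norm_mult of_real_diff[symmetric] del: of_real_diff)
      also have "\<dots> \<le> ?c k * B" using B[of k] k True c0[of k] by (intro mult_left_mono) auto
      finally show ?thesis .
    next
      case False
      then have "?c k = 0" using clamp_diff_zero[OF ab(2) False] h by simp
      then show ?thesis by simp
    qed
  qed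
  also have "\<dots> = (b - a) * B" by (simp add: sum_distrib_right[symmetric] sc)
  finally show ?thesis .
qed

lemma Pol_Re:
  assumes h: "0 < h" and neg: "\<And>k. Re (G (real k * h) (wseq G h w0 k)) \<le> 0"
  shows "Re (Pol G h w0 N t) \<le> Re w0"
proof -
  have "Re (\<Sum>k<N. of_real (clamp h k t) * G (real k * h) (wseq G h w0 k)) \<le> 0"
    unfolding Re_sum by (intro sum_nonpos) (simp add: mult_nonneg_nonpos clamp_nonneg h less_imp_le neg)
  then show ?thesis by (simp add: Pol_def)
qed

lemma Pol_extend:
  assumes h: "0 < h" and "0 \<le> t" "t \<le> real N * h"
  shows "Pol G h w0 (N + j) t = Pol G h w0 N t"
proof (induction j)
  case 0 then show ?case by simp
next
  case (Suc j)
  have "real N * h \<le> (real N + real j) * h" using h by (simp add: mult_right_mono)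
  then have "t - (real N + real j) * h \<le> 0" using assms by linarith
  then have "clamp h (N + j) t = 0" using assms by (simp add: clamp_def)
  then show ?case using Suc by (simp add: Pol_def)
qed

definition Apx where "Apx G h w0 t = Pol G h w0 (nat \<lceil>t / h\<rceil>) t"

lemma Apx_eq:
  assumes h: "0 < h" and "0 \<le> t" "t \<le> real N * h"
  shows "Apx G h w0 t = Pol G h w0 N t"
proof -
  let ?N0 = "nat \<lceil>t / h\<rceil>"
  have "t / h \<le> real N" using assms by (simp add: divide_le_eq)
  then have le: "?N0 \<le> N" by linarith
  have "t / h \<le> real ?N0" by linarith
  then have t0: "t \<le> real ?N0 * h" using h by (simp add: divide_le_eq)
  have "Pol G h w0 (?N0 + (N - ?N0)) t = Pol G h w0 ?N0 t"
    by (rule Pol_extend[OF h assms(2) t0])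
  then show ?thesis using le by (simp add: Apx_def)
qed

lemma equi_lip_subseq:
  fixes f :: "nat \<Rightarrow> real \<Rightarrow> complex"
  assumes f0: "\<And>n. f n 0 = w0"
    and lip: "\<And>n s t. 0 \<le> s \<Longrightarrow> 0 \<le> t \<Longrightarrow> norm (f n s - f n t) \<le> M * \<bar>s - t\<bar>"
    and M: "0 \<le> M"
  shows "\<exists>\<sigma> w. strict_mono \<sigma> \<and> (\<forall>t\<ge>0. (\<lambda>n. f (\<sigma> n) t) \<longlonglongrightarrow> w t)"
proof -
  define q where "q k = real (fst (prod_decode k)) / real (Suc (snd (prod_decode k)))" for k
  have q0: "0 \<le> q k" for k by (simp add: q_def)
  have bnd: "bounded (range (\<lambda>i. f (s i) t))" if "0 \<le> t" for s t
  proof -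
    have "norm (f (s i) t - w0) \<le> M * t" for i using lip[of t 0 "s i"] that f0 by simp
    then show ?thesis unfolding bounded_iff
      by (intro exI[of _ "norm w0 + M * t"]) (auto intro: order_trans[OF norm_triangle_sub[of _ w0]])
  qed
  interpret D: subseqs "\<lambda>k s. convergent (\<lambda>i. f (s i) (q k))"
  proof
    fix k and s :: "nat \<Rightarrow> nat" assume "strict_mono s"
    obtain l r where r: "strict_mono (r::nat\<Rightarrow>nat)" "((\<lambda>i. f (s i) (q k)) \<circ> r) \<longlonglongrightarrow> l"
      using bounded_imp_convergent_subsequence[OF bnd[OF q0]] by blast
    then show "\<exists>r'. strict_mono r' \<and> convergent (\<lambda>i. f ((s \<circ> r') i) (q k))"
      by (intro exI[of _ r]) (auto simp: convergent_def o_def)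
  qed
  define \<sigma> where "\<sigma> = D.diagseq"
  have conv_q: "convergent (\<lambda>i. f (\<sigma> i) (q k))" for k
  proof -
    have "convergent (\<lambda>i. f ((D.diagseq \<circ> (+) (Suc k)) i) (q k))"
    proof (rule D.diagseq_holds)
      fix r s n assume "strict_mono (r::nat\<Rightarrow>nat)" "convergent (\<lambda>i. f (s i) (q n))"
      then show "convergent (\<lambda>i. f ((s \<circ> r) i) (q n))"
        using LIMSEQ_subseq_LIMSEQ unfolding convergent_def o_def by blast
    qed
    then have "convergent (\<lambda>i. f (D.diagseq (i + Suc k)) (q k))" by (simp add: o_def add.commute)
    then show ?thesis unfolding \<sigma>_def by (rule iffD1[OF convergent_ignore_initial_segment])
  qed
  have conv: "convergent (\<lambda>n. f (\<sigma> n) t)" if t: "0 \<le> t" for t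
  proof -
    have "Cauchy (\<lambda>n. f (\<sigma> n) t)"
    proof (rule metric_CauchyI)
      fix e :: real assume e: "0 < e"
      obtain m :: nat where m: "3 * (M + 1) / e < real m" using reals_Archimedean2 by blast
      have m1: "M / real (Suc m) < e / 3"
      proof -
        have "3 * (M + 1) < e * real m" using m e by (simp add: divide_less_eq mult.commute)
        then have "3 * M < e * real (Suc m)" using e by (simp add: algebra_simps)
        then show ?thesis by (simp add: divide_less_eq algebra_simps)
      qed
      define j where "j = nat \<lfloor>t * real (Suc m)\<rfloor>"
      define k where "k = prod_encode (j, m)"
      have qk: "q k = real j / real (Suc m)" by (simp add: q_def k_def)
      have x0: "0 \<le> t * real (Suc m)" using t by simp
      have jr: "real j = of_int \<lfloor>t * real (Suc m)\<rfloor>" using x0 by (simp add: j_def)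
      have j1: "real j \<le> t * real (Suc m)" "t * real (Suc m) < real j + 1"
        using jr of_int_floor_le[of "t * real (Suc m)"] real_of_int_floor_add_one_gt[of "t * real (Suc m)"] by linarith+
      have dq: "\<bar>t - q k\<bar> \<le> 1 / real (Suc m)"
      proof -
        have sp: "0 < real (Suc m)" by simp
        have "t - q k = (t * real (Suc m) - real j) / real (Suc m)" unfolding qk using sp by (simp add: field_simps)
        moreover have "0 \<le> (t * real (Suc m) - real j) / real (Suc m)" using j1 sp by simp
        moreover have "(t * real (Suc m) - real j) / real (Suc m) \<le> 1 / real (Suc m)"
          using j1 sp by (intro divide_right_mono) auto
        ultimately show ?thesis by simp
      qed
      have "M * \<bar>t - q k\<bar> \<le> M * (1 / real (Suc m))" using dq M by (rule mult_left_mono)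
      then have Mq: "M * \<bar>t - q k\<bar> < e / 3" using m1 by (simp only: mult_1_right times_divide_eq_right)
      obtain N where N: "\<And>m n. N \<le> m \<Longrightarrow> N \<le> n \<Longrightarrow> dist (f (\<sigma> m) (q k)) (f (\<sigma> n) (q k)) < e / 3"
        using metric_CauchyD[OF iffD2[OF Cauchy_convergent_iff conv_q[of k]], of "e/3"] e by auto
      show "\<exists>N. \<forall>m\<ge>N. \<forall>n\<ge>N. dist (f (\<sigma> m) t) (f (\<sigma> n) t) < e"
      proof (intro exI allI impI)
        fix a b assume ab: "N \<le> a" "N \<le> b"
        have "dist (f (\<sigma> a) t) (f (\<sigma> b) t) \<le> dist (f (\<sigma> a) t) (f (\<sigma> a) (q k)) + dist (f (\<sigma> a) (q k)) (f (\<sigma> b) (q k)) + dist (f (\<sigma> b) (q k)) (f (\<sigma> b) t)"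
          by (meson dist_triangle order_trans add_mono order_refl)
        also have "\<dots> < e / 3 + e / 3 + e / 3"
        proof -
          have "dist (f (\<sigma> a) t) (f (\<sigma> a) (q k)) < e / 3" using order_le_less_trans[OF lip[OF t q0[of k], of "\<sigma> a"] Mq] by (simp add: dist_norm)
          moreover have "dist (f (\<sigma> b) (q k)) (f (\<sigma> b) t) < e / 3" using order_le_less_trans[OF lip[OF t q0[of k], of "\<sigma> b"] Mq] by (simp add: dist_norm norm_minus_commute)
          ultimately show ?thesis using N[OF ab] by linarith
        qed
        finally show "dist (f (\<sigma> a) t) (f (\<sigma> b) t) < e" by simp
      qed
    qed
    then show ?thesis by (simp add: Cauchy_convergent_iff)
  qed
  show ?thesis
    by (intro exI[of _ \<sigma>] exI[of _ "\<lambda>t. lim (\<lambda>n. f (\<sigma> n) t)"] conjI)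
      (use conv convergent_LIMSEQ_iff \<sigma>_def D.subseq_diagseq in auto)
qed


lemma Pol_lip:
  assumes h: "0 < h" and ab: "0 \<le> a" "0 \<le> b" "a \<le> real N * h" "b \<le> real N * h"
    and B: "\<And>k. norm (G (real k * h) (wseq G h w0 k)) \<le> M"
  shows "norm (Pol G h w0 N b - Pol G h w0 N a) \<le> M * \<bar>b - a\<bar>"
proof (cases "a \<le> b")
  case True
  have "norm (Pol G h w0 N b - Pol G h w0 N a - of_real (b - a) * 0) \<le> (b - a) * M"
    by (rule Pol_est[OF h ab(1) True ab(4)]) (use B in simp)
  then show ?thesis using True by (simp add: mult.commute)
next
  case False
  have "norm (Pol G h w0 N a - Pol G h w0 N b - of_real (a - b) * 0) \<le> (a - b) * M"
    by (rule Pol_est[OF h ab(2) _ ab(3)]) (use B False in simp_all)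
  then show ?thesis using False by (simp add: mult.commute norm_minus_commute)
qed

lemma ceil_bound: "0 < h \<Longrightarrow> 0 \<le> b \<Longrightarrow> b \<le> real (nat \<lceil>b / h\<rceil>) * h"
proof -
  assume h: "0 < h" and b: "0 \<le> b"
  have "b / h \<le> real (nat \<lceil>b / h\<rceil>)" by linarith
  then show ?thesis using h by (simp add: divide_le_eq)
qed

lemma peano:
  fixes G :: "real \<Rightarrow> complex \<Rightarrow> complex" and I :: "real set"
  assumes I0: "I \<subseteq> {0..}"
    and Iopen: "\<And>t. t \<in> I \<Longrightarrow> \<exists>\<eta>>0. \<forall>s. 0 \<le> s \<and> \<bar>s - t\<bar> < \<eta> \<longrightarrow> s \<in> I"
    and w0: "Re w0 < L"
    and bnd: "\<And>s v. s \<in> I \<Longrightarrow> Re v < L \<Longrightarrow> norm (G s v) \<le> M"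
    and neg: "\<And>s v. s \<in> I \<Longrightarrow> Re v < L \<Longrightarrow> Re (G s v) \<le> 0"
    and cont: "\<And>s v. s \<in> I \<Longrightarrow> Re v < L \<Longrightarrow> isCont (\<lambda>p. G (fst p) (snd p)) (s, v)"
    and M: "0 \<le> M"
  shows "\<exists>w. w 0 = w0 \<and> (\<forall>t\<in>I. Re (w t) \<le> Re w0 \<and> (w has_vector_derivative G t (w t)) (at t within I))"
proof -
  define G' where "G' s v = (if s \<in> I \<and> Re v < L then G s v else 0)" for s v
  have G'b: "norm (G' s v) \<le> M" for s v using bnd M by (simp add: G'_def)
  have G'n: "Re (G' s v) \<le> 0" for s v using neg by (simp add: G'_def)
  define hh where "hh n = 1 / real (Suc n)" for n
  have hh: "0 < hh n" for n by (simp add: hh_def)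
  define f where "f n t = Apx G' (hh n) w0 t" for n t
  have fP: "f n t = Pol G' (hh n) w0 N t" if "0 \<le> t" "t \<le> real N * hh n" for n t N
    unfolding f_def by (rule Apx_eq[OF hh that])
  have f0: "f n 0 = w0" for n
  proof -
    have "f n 0 = Pol G' (hh n) w0 0 0" by (rule fP) auto
    then show ?thesis by (simp add: Pol_def)
  qed
  have flip: "norm (f n s - f n t) \<le> M * \<bar>s - t\<bar>" if "0 \<le> s" "0 \<le> t" for n s t
  proof -
    define N where "N = nat \<lceil>max s t / hh n\<rceil>"
    have Nb: "max s t \<le> real N * hh n" unfolding N_def using ceil_bound[OF hh, of "max s t"] that by simp
    have "norm (Pol G' (hh n) w0 N s - Pol G' (hh n) w0 N t) \<le> M * \<bar>s - t\<bar>"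
      by (rule Pol_lip[OF hh that(2,1)]) (use Nb G'b in auto)
    then show ?thesis using fP[of s N n] fP[of t N n] that Nb by simp
  qed
  have fRe: "Re (f n t) \<le> Re w0" for n t unfolding f_def Apx_def by (rule Pol_Re[OF hh G'n])
  obtain \<sigma> w where \<sigma>: "strict_mono \<sigma>" and wlim: "\<And>t. 0 \<le> t \<Longrightarrow> (\<lambda>n. f (\<sigma> n) t) \<longlonglongrightarrow> w t"
    using equi_lip_subseq[of f w0 M, OF f0 flip M] by blast
  have w00: "w 0 = w0"
    using wlim[of 0] by (simp add: f0 LIMSEQ_const_iff)
  have wRe: "Re (w t) \<le> Re w0" if "0 \<le> t" for t
    using tendsto_Re[OF wlim[OF that]] fRe by (intro LIMSEQ_le_const2) auto
  have deriv: "(w has_vector_derivative G t1 (w t1)) (at t1 within {0..})" if t1: "t1 \<in> I" for t1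
  proof -
    define w1 where "w1 = w t1"
    define V where "V = G t1 w1"
    have t10: "0 \<le> t1" using t1 I0 by auto
    have w1L: "Re w1 < L" using wRe[OF t10] w0 unfolding w1_def by simp
    show ?thesis unfolding has_vector_derivative_def has_derivative_within_alt
    proof (intro conjI allI impI bounded_linear_scaleR_left)
      fix e :: real assume e: "0 < e"
      obtain \<eta>1 where \<eta>1: "\<eta>1 > 0" "\<And>p. dist p (t1, w1) < \<eta>1 \<Longrightarrow> dist (G (fst p) (snd p)) V < e"
        using cont[OF t1 w1L] e unfolding continuous_at_eps_delta V_def by force
      obtain \<eta>2 where \<eta>2: "\<eta>2 > 0" "\<And>s. 0 \<le> s \<Longrightarrow> \<bar>s - t1\<bar> < \<eta>2 \<Longrightarrow> s \<in> I"
        using Iopen[OF t1] by blast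
      define \<eta> where "\<eta> = min \<eta>1 (min \<eta>2 (L - Re w1))"
      have \<eta>: "0 < \<eta>" using \<eta>1 \<eta>2 w1L by (simp add: \<eta>_def)
      have Cl: "norm (G' s v - V) \<le> e" if "0 \<le> s" "\<bar>s - t1\<bar> < \<eta> / 2" "norm (v - w1) < \<eta> / 2" for s v
      proof -
        have sI: "s \<in> I" using \<eta>2(2)[OF that(1)] that(2) \<eta> by (simp add: \<eta>_def)
        have "Re v - Re w1 \<le> norm (v - w1)" using abs_Re_le_cmod[of "v - w1"] by simp
        then have vL: "Re v < L" using that(3) \<eta> by (simp add: \<eta>_def)
        have "dist (s, v) (t1, w1) \<le> norm (s - t1) + norm (v - w1)"
          using norm_Pair_le[of "s - t1" "v - w1"] by (simp add: dist_norm)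
        also have "\<dots> < \<eta>1" using that(2,3) by (simp add: \<eta>_def)
        finally have "dist (G s v) V < e" using \<eta>1(2)[of "(s, v)"] by simp
        then show ?thesis using sI vL by (simp add: G'_def dist_norm)
      qed
      define K where "K = 8 * (M + 1)"
      have K: "0 < K" using M by (simp add: K_def)
      define d where "d = min 1 (\<eta> / K)"
      have d: "0 < d" using \<eta> K by (simp add: d_def)
      show "\<exists>d>0. \<forall>y\<in>{0..}. norm (y - t1) < d \<longrightarrow> norm (w y - w t1 - (y - t1) *\<^sub>R G t1 (w t1)) \<le> e * norm (y - t1)"
      proof (intro exI[of _ d] conjI ballI impI d)
        fix y assume y0: "y \<in> {0..}" and yd: "norm (y - t1) < d"
        have y0': "0 \<le> y" using y0 by simp
        have c0: "0 < \<eta> / K" using \<eta> K by simp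
        obtain N1 :: nat where N1: "1 / (\<eta> / K) < real N1" using reals_Archimedean2 by blast
        have N1': "1 < real N1 * (\<eta> / K)" using N1 pos_divide_less_eq[OF c0] by blast
        have hsmall: "hh n < \<eta> / K" if "N1 \<le> n" for n
        proof -
          have "1 < real (Suc n) * (\<eta> / K)"
            using N1' that c0 by (meson less_le_trans mult_right_mono of_nat_le_iff le_SucI less_imp_le)
          then show ?thesis unfolding hh_def using pos_divide_less_eq[of "real (Suc n)" 1 "\<eta> / K"] by (simp add: mult.commute)
        qed
        have ev1: "eventually (\<lambda>n. hh (\<sigma> n) < \<eta> / K) sequentially"
          unfolding eventually_sequentially
          using hsmall seq_suble[OF \<sigma>] by (meson order_trans)
        have ev2: "eventually (\<lambda>n. dist (f (\<sigma> n) t1) w1 < \<eta> / 4) sequentially"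
        proof -
          have "\<eta> / 4 > 0" using \<eta> by simp
          then show ?thesis using wlim[OF t10] unfolding w1_def tendsto_iff by blast
        qed
        have ev: "eventually (\<lambda>n. norm (f (\<sigma> n) y - f (\<sigma> n) t1 - (y - t1) *\<^sub>R V) \<le> e * norm (y - t1)) sequentially"
          using ev1 ev2
        proof eventually_elim
          case (elim n)
          define h where "h = hh (\<sigma> n)"
          have h: "0 < h" by (simp add: h_def hh)
          define N where "N = nat \<lceil>(t1 + 1) / h\<rceil>"
          have Nb: "t1 + 1 \<le> real N * h" unfolding N_def using ceil_bound[OF h, of "t1 + 1"] t10 by simp
          have dy: "\<bar>y - t1\<bar> < d" using yd by simp
          have d1: "d \<le> 1" "d \<le> \<eta> / K" by (auto simp: d_def)
          define a where "a = min y t1"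
          define b where "b = max y t1"
          have ab: "0 \<le> a" "a \<le> b" "b \<le> real N * h" "a \<le> real N * h"
            using y0' t10 dy d1 Nb by (auto simp: a_def b_def)
          have hK: "h < \<eta> / K" using elim(1) by (simp add: h_def)
          have MK: "M * (\<eta> / K) \<le> \<eta> / 8"
          proof -
            have "M * (\<eta> / K) = \<eta> * (M / K)" by simp
            also have "\<dots> \<le> \<eta> * (1 / 8)" using \<eta> M K by (intro mult_left_mono) (auto simp: K_def divide_le_eq)
            finally show ?thesis by simp
          qed
          have Kge: "\<eta> / K \<le> \<eta> / 8" using \<eta> M by (intro divide_left_mono) (auto simp: K_def)
          have fw1: "norm (Pol G' h w0 N t1 - w1) < \<eta> / 4"
            using elim(2) fP[of t1 N "\<sigma> n"] t10 Nb by (simp add: h_def dist_norm)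
          have est: "norm (Pol G' h w0 N b - Pol G' h w0 N a - of_real (b - a) * V) \<le> (b - a) * e"
          proof (rule Pol_est[OF h ab(1,2,3)])
            fix k assume k: "k < N" "real k * h < b" "a < real k * h + h"
            have kh0: "0 \<le> real k * h" using h by simp
            have kt: "\<bar>real k * h - t1\<bar> < d + h" using k(2,3) dy h d unfolding a_def b_def by (cases "y \<le> t1") (auto simp: abs_less_iff max_def min_def)
            have khN: "real k * h \<le> real N * h" using k(1) h by simp
            have "norm (wseq G' h w0 k - w1) \<le> norm (Pol G' h w0 N (real k * h) - Pol G' h w0 N t1) + norm (Pol G' h w0 N t1 - w1)"
              using Pol_node[OF h, of k N G' w0] k(1) norm_triangle_ineq[of "Pol G' h w0 N (real k * h) - Pol G' h w0 N t1" "Pol G' h w0 N t1 - w1"] by simp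
            also have "\<dots> < M * \<bar>real k * h - t1\<bar> + \<eta> / 4"
              using Pol_lip[OF h t10 kh0 _ khN, of G' w0 M] Nb G'b fw1 by (intro add_le_less_mono) auto
            also have "\<dots> \<le> M * (2 * (\<eta> / K)) + \<eta> / 4"
              using kt d1 hK M by (intro add_right_mono mult_left_mono) auto
            also have "\<dots> \<le> \<eta> / 2"
            proof -
              have "M * (2 * (\<eta> / K)) = 2 * (M * (\<eta> / K))" by (simp only: mult.left_commute)
              then show ?thesis using MK by linarith
            qed
            finally have wk: "norm (wseq G' h w0 k - w1) < \<eta> / 2" .
            have "\<bar>real k * h - t1\<bar> < \<eta> / 2" using kt d1 hK Kge by linarith
            then show "norm (G' (real k * h) (wseq G' h w0 k) - V) \<le> e"
              by (rule Cl[OF kh0 _ wk])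
          qed
          have fy: "f (\<sigma> n) y = Pol G' h w0 N y" using fP[of y N "\<sigma> n"] y0' dy d1 Nb by (simp add: h_def)
          have ft: "f (\<sigma> n) t1 = Pol G' h w0 N t1" using fP[of t1 N "\<sigma> n"] t10 Nb by (simp add: h_def)
          show ?case
          proof (cases "t1 \<le> y")
            case True
            then show ?thesis using est by (simp add: a_def b_def fy ft scaleR_conv_of_real mult.commute)
          next
            case False
            have eq: "Pol G' h w0 N y - Pol G' h w0 N t1 - of_real (y - t1) * V = - (Pol G' h w0 N t1 - Pol G' h w0 N y - of_real (t1 - y) * V)"
              by (simp add: algebra_simps)
            have est': "norm (Pol G' h w0 N t1 - Pol G' h w0 N y - of_real (t1 - y) * V) \<le> (t1 - y) * e"
              using est False by (simp add: a_def b_def min_def max_def)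
            have "norm (Pol G' h w0 N y - Pol G' h w0 N t1 - of_real (y - t1) * V) \<le> (t1 - y) * e"
              using est' unfolding eq norm_minus_cancel .
            moreover have "norm (y - t1) = t1 - y" using False by simp
            ultimately show ?thesis by (simp add: fy ft scaleR_conv_of_real mult.commute)
          qed
        qed
        have lim: "(\<lambda>n. norm (f (\<sigma> n) y - f (\<sigma> n) t1 - (y - t1) *\<^sub>R V)) \<longlonglongrightarrow> norm (w y - w1 - (y - t1) *\<^sub>R V)"
          unfolding w1_def by (intro tendsto_intros wlim y0' t10)
        show "norm (w y - w t1 - (y - t1) *\<^sub>R G t1 (w t1)) \<le> e * norm (y - t1)"
          using tendsto_le[OF trivial_limit_sequentially tendsto_const lim ev] by (simp add: V_def w1_def)
      qed
    qed
  qed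
  show ?thesis
  proof (intro exI[of _ w] conjI w00 ballI)
    fix t assume t: "t \<in> I"
    then show "Re (w t) \<le> Re w0" using wRe I0 by auto
    show "(w has_vector_derivative G t (w t)) (at t within I)"
      by (rule has_vector_derivative_within_subset[OF deriv[OF t] I0])
  qed
qed



lemma normR_bound:
  assumes set: "standing_setting lam a R \<rho> r" and xy: "(x, y) \<in> polydisc \<rho> r" and x0: "x \<noteq> 0"
  shows "cmod (R x y) \<le> normR a R \<rho> r * cmod x ^ a"
proof -
  have bdd: "bdd_above ((\<lambda>(x, y). cmod (R x y / x ^ a)) ` {(x, y)\<in>polydisc \<rho> r. x \<noteq> 0})"
    using set by (simp add: standing_setting_def)
  have "cmod (R x y / x ^ a) \<le> normR a R \<rho> r"
    unfolding normR_def using cSUP_upper[OF _ bdd, of "(x, y)"] xy x0 by simp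
  then have "cmod (R x y) / cmod x ^ a \<le> normR a R \<rho> r" by (simp add: norm_divide norm_power)
  moreover have "0 < cmod x ^ a" using x0 by simp
  ultimately show ?thesis by (simp add: divide_le_eq)
qed

lemma normR_nonneg:
  assumes set: "standing_setting lam a R \<rho> r"
  shows "0 \<le> normR a R \<rho> r"
proof -
  have pos: "0 < \<rho>" "0 < r" using set by (auto simp: standing_setting_def)
  have "(of_real (\<rho> / 2), 0) \<in> polydisc \<rho> r" using pos by (simp add: polydisc_def)
  from normR_bound[OF set this] have "cmod (R (of_real (\<rho>/2)) 0) \<le> normR a R \<rho> r * (\<rho>/2) ^ a"
    using pos by (simp add: norm_power)
  moreover have "0 < (\<rho>/2) ^ a" using pos by simp
  ultimately show ?thesis by (metis norm_ge_zero order_trans zero_le_mult_iff not_le)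
qed

lemma exp_bound:
  assumes set: "standing_setting lam a R \<rho> r" and z: "Re z < ln \<rho>" and v: "Re v < ln r"
  shows "cmod (R (exp z) (exp v)) \<le> normR a R \<rho> r * exp (real a * Re z)"
    and "(exp z, exp v) \<in> polydisc \<rho> r"
proof -
  have pos: "0 < \<rho>" "0 < r" using set by (auto simp: standing_setting_def)
  have "exp (Re z) < \<rho>" using z pos by (metis exp_less_cancel_iff exp_ln)
  moreover have "exp (Re v) < r" using v pos by (metis exp_less_cancel_iff exp_ln)
  ultimately show P: "(exp z, exp v) \<in> polydisc \<rho> r" by (simp add: polydisc_def)
  show "cmod (R (exp z) (exp v)) \<le> normR a R \<rho> r * exp (real a * Re z)"
    using normR_bound[OF set P] by (simp add: norm_power exp_of_nat_mult)
qed

lemma exp_bound2: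
  assumes set: "standing_setting lam a R \<rho> r" and z: "Re z < ln \<rho>" and v: "Re v < ln r"
  shows "cmod (R (exp z) (exp v)) \<le> normR a R \<rho> r * \<rho> ^ a"
proof -
  have pos: "0 < \<rho>" using set by (auto simp: standing_setting_def)
  have "exp (Re z) < \<rho>" using z pos by (metis exp_less_cancel_iff exp_ln)
  then have "exp (real a * Re z) \<le> \<rho> ^ a" by (simp add: exp_of_nat_mult power_mono less_imp_le)
  then show ?thesis using exp_bound(1)[OF set z v] normR_nonneg[OF set] by (meson mult_left_mono order_trans)
qed

lemma R_cont:
  assumes set: "standing_setting lam a R \<rho> r" and p: "p \<in> polydisc \<rho> r"
  shows "isCont (\<lambda>q. R (fst q) (snd q)) p"
proof -
  have "holomorphic2 R (polydisc \<rho> r)" using set by (simp add: standing_setting_def)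
  then obtain A B where "((\<lambda>q. R (fst q) (snd q)) has_derivative (\<lambda>h. A * fst h + B * snd h)) (at p)"
    using p unfolding holomorphic2_def by blast
  then show ?thesis by (rule has_derivative_continuous)
qed



lemma interval_sub:
  assumes J: "is_interval (J::real set)" and "0 \<in> J" "t \<in> J"
  shows "{0..t} \<subseteq> J"
proof
  fix x assume x: "x \<in> {0..t}"
  have H: "\<forall>a\<in>J. \<forall>b\<in>J. \<forall>x. a \<le> x \<and> x \<le> b \<longrightarrow> x \<in> J" using J by (simp only: is_interval_1)
  have "0 \<le> x \<and> x \<le> t" using x by simp
  then show "x \<in> J" using H[rule_format, OF assms(2) assms(3)] by simp
qed

lemma interior_sub:
  assumes "{0..t} \<subseteq> (J::real set)" "0 < x" "x < t"
  shows "x \<in> interior J"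
proof -
  have s: "{0<..<t} \<subseteq> J" using assms(1) by (meson greaterThanLessThan_subseteq_atLeastAtMost_iff order_refl order_trans)
  have "{0<..<t} \<subseteq> interior J" by (rule interior_maximal[OF s open_greaterThanLessThan])
  then show ?thesis using assms(2,3) by (simp add: subset_iff)
qed

lemma fid1: "(L::real) \<noteq> 0 \<Longrightarrow> A \<noteq> 0 \<Longrightarrow> T \<noteq> 0 \<Longrightarrow> N * X / L * Y / (A * T) = X / (L * T * A) * N * Y"
  by (simp add: field_simps)

lemma fid2: "(L::real) \<noteq> 0 \<Longrightarrow> A \<noteq> 0 \<Longrightarrow> T \<noteq> 0 \<Longrightarrow> N * X / L * (E - 1) / (A * T) = X / (L * (- T) * A) * N * (1 - E)"
  by (simp add: field_simps)

lemma part2: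
  assumes set: "standing_setting lam a R \<rho> r" and th: "cmod \<theta> = 1"
    and J: "is_interval J" "J \<subseteq> {0..}" and lift: "is_lift lam R \<rho> r z0 w0 \<theta> J w" and t: "t \<in> J"
  shows "(Re \<theta> \<noteq> 0 \<longrightarrow>
                 cmod (w t - w0 - of_real t * \<theta> / lam)
                   \<le> exp (real a * Re z0) / (cmod lam * \<bar>Re \<theta>\<bar> * real a)
                       * normR a R \<rho> r * \<bar>1 - exp (real a * t * Re \<theta>)\<bar>) \<and>
              (Re \<theta> = 0 \<longrightarrow>
                 cmod (w t - w0 - of_real t * \<theta> / lam)
                   \<le> exp (real a * Re z0) / cmod lam * t * normR a R \<rho> r)"
proof -
  have lam0: "lam \<noteq> 0" and a0: "0 < a" using set by (auto simp: standing_setting_def)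
  define N where "N = normR a R \<rho> r"
  have N0: "0 \<le> N" using normR_nonneg[OF set] by (simp add: N_def)
  define C where "C = N * exp (real a * Re z0) / cmod lam"
  have C0: "0 \<le> C" using N0 by (simp add: C_def)
  define g where "g s = w s - w0 - of_real s * \<theta> / lam" for s
  define D where "D s = \<theta> / lam * R (exp (z0 + of_real s * \<theta>)) (exp (w s))" for s
  have J0: "0 \<in> J" and w00: "w 0 = w0" using lift by (auto simp: is_lift_def)
  have gd: "(g has_vector_derivative D s) (at s within J)" if s: "s \<in> J" for s
  proof -
    have wd: "(w has_vector_derivative (\<theta> / lam * (1 + R (exp (z0 + of_real s * \<theta>)) (exp (w s))))) (at s within J)"
      using lift s by (simp add: is_lift_def)
    have ld: "((\<lambda>s. of_real s * (\<theta> / lam)) has_vector_derivative (\<theta> / lam)) (at s within J)"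
      unfolding has_vector_derivative_def scaleR_conv_of_real[symmetric]
      by (rule bounded_linear_imp_has_derivative[OF bounded_linear_scaleR_left])
    have "((\<lambda>s. w s - w0 - of_real s * (\<theta> / lam)) has_vector_derivative
        (\<theta> / lam * (1 + R (exp (z0 + of_real s * \<theta>)) (exp (w s))) - 0 - \<theta> / lam)) (at s within J)"
      by (intro has_vector_derivative_diff wd ld has_vector_derivative_const)
    then show ?thesis unfolding g_def D_def by (simp add: algebra_simps)
  qed
  have Db: "norm (D s) \<le> C * exp (real a * s * Re \<theta>)" if s: "s \<in> J" for s
  proof -
    have U: "(z0 + of_real s * \<theta>, w s) \<in> Utilde \<rho> r" using lift s by (simp add: is_lift_def)
    then have z: "Re (z0 + of_real s * \<theta>) < ln \<rho>" and v: "Re (w s) < ln r" by (auto simp: Utilde_def)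
    have "norm (D s) = cmod (R (exp (z0 + of_real s * \<theta>)) (exp (w s))) / cmod lam"
      using th by (simp add: D_def norm_mult norm_divide)
    also have "\<dots> \<le> N * exp (real a * Re (z0 + of_real s * \<theta>)) / cmod lam"
      using exp_bound(1)[OF set z v] lam0 by (simp add: N_def divide_right_mono)
    also have "\<dots> = C * exp (real a * s * Re \<theta>)"
      by (simp add: C_def algebra_simps exp_add[symmetric])
    finally show ?thesis .
  qed
  show ?thesis
  proof (cases "t = 0")
    case True
    then show ?thesis using w00 by simp
  next
    case False
    then have t0: "0 < t" using t J by force
    have sub: "{0..t} \<subseteq> J" by (rule interval_sub[OF J(1) J0 t])
    have gc: "continuous_on {0..t} g"
      unfolding continuous_on_eq_continuous_within
      using sub by (meson continuous_within_subset gd has_vector_derivative_continuous subsetD)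
    have gdi: "(g has_vector_derivative D x) (at x)" if "0 < x" "x < t" for x
    proof -
      have "x \<in> J" using subsetD[OF sub, of x] that by simp
      then show ?thesis using gd[of x] at_within_interior[OF interior_sub[OF sub that]] by simp
    qed
    have gt: "g t = w t - w0 - of_real t * \<theta> / lam" by (simp add: g_def)
    have g0: "g 0 = 0" by (simp add: g_def w00)
    show ?thesis
    proof (intro conjI impI)
      assume Rt: "Re \<theta> \<noteq> 0"
      define c where "c = real a * Re \<theta>"
      have c0: "c \<noteq> 0" using Rt a0 by (simp add: c_def)
      define \<phi> where "\<phi> s = C * (exp (real a * s * Re \<theta>) - 1) / c" for s
      have \<phi>d: "(\<phi> has_vector_derivative C * exp (real a * x * Re \<theta>)) (at x)" for x
      proof -
        have "(\<phi> has_real_derivative C * (exp (real a * x * Re \<theta>) * (real a * Re \<theta>)) / c) (at x)"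
          unfolding \<phi>_def using c0 by (auto intro!: derivative_eq_intros)
        then show ?thesis using c0 by (simp add: has_real_derivative_iff_has_vector_derivative c_def)
      qed
      have "norm (g t - g 0) \<le> \<phi> t - \<phi> 0"
      proof (rule differentiable_bound_general[OF t0 gc _ gdi \<phi>d])
        show "continuous_on {0..t} \<phi>" unfolding \<phi>_def using c0 by (intro continuous_intros) auto
        fix x assume x: "0 < x" "x < t"
        have "x \<in> J" using subsetD[OF sub, of x] x by simp
        then show "norm (D x) \<le> C * exp (real a * x * Re \<theta>)" by (rule Db)
      qed
      also have "\<phi> t - \<phi> 0 = exp (real a * Re z0) / (cmod lam * \<bar>Re \<theta>\<bar> * real a) * N * \<bar>1 - exp (real a * t * Re \<theta>)\<bar>"
      proof (cases "Re \<theta> > 0")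
        case True
        then have "1 \<le> exp (real a * t * Re \<theta>)" using t0 by simp
        then have "\<bar>1 - exp (real a * t * Re \<theta>)\<bar> = exp (real a * t * Re \<theta>) - 1" by simp
        moreover have "\<bar>Re \<theta>\<bar> = Re \<theta>" using True by simp
        ultimately show ?thesis using True a0 lam0 fid1[of "cmod lam" "real a" "Re \<theta>" N "exp (real a * Re z0)" "exp (real a * t * Re \<theta>) - 1"]
          unfolding \<phi>_def c_def C_def by simp
      next
        case False
        then have neg: "Re \<theta> < 0" using Rt by simp
        then have "real a * t * Re \<theta> \<le> 0" using t0 by (simp add: mult_nonneg_nonpos)
        then have "exp (real a * t * Re \<theta>) \<le> 1" by simp
        then have "\<bar>1 - exp (real a * t * Re \<theta>)\<bar> = 1 - exp (real a * t * Re \<theta>)" by simp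
        moreover have "\<bar>Re \<theta>\<bar> = - Re \<theta>" using neg by simp
        ultimately show ?thesis using neg a0 lam0 fid2[of "cmod lam" "real a" "Re \<theta>" N "exp (real a * Re z0)" "exp (real a * t * Re \<theta>)"]
          unfolding \<phi>_def c_def C_def by simp
      qed
      finally show "cmod (w t - w0 - of_real t * \<theta> / lam)
          \<le> exp (real a * Re z0) / (cmod lam * \<bar>Re \<theta>\<bar> * real a) * normR a R \<rho> r * \<bar>1 - exp (real a * t * Re \<theta>)\<bar>"
        using gt g0 by (simp add: N_def)
    next
      assume Rt: "Re \<theta> = 0"
      define \<phi> where "\<phi> s = C * s" for s
      have \<phi>d: "(\<phi> has_vector_derivative C) (at x)" for x
      proof -
        have "(\<phi> has_real_derivative C) (at x)"
          unfolding \<phi>_def by (auto intro!: derivative_eq_intros)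
        then show ?thesis by (simp add: has_real_derivative_iff_has_vector_derivative)
      qed
      have "norm (g t - g 0) \<le> \<phi> t - \<phi> 0"
      proof (rule differentiable_bound_general[OF t0 gc _ gdi \<phi>d])
        show "continuous_on {0..t} \<phi>" unfolding \<phi>_def by (intro continuous_intros)
        fix x assume x: "0 < x" "x < t"
        have "x \<in> J" using subsetD[OF sub, of x] x by simp
        then show "norm (D x) \<le> C" using Db[of x] Rt by simp
      qed
      then show "cmod (w t - w0 - of_real t * \<theta> / lam) \<le> exp (real a * Re z0) / cmod lam * t * normR a R \<rho> r"
        using gt g0 by (simp add: \<phi>_def C_def N_def mult.commute mult.left_commute)
    qed
  qed
qed



lemma interval_sub':
  assumes J: "is_interval (J::real set)" and "s \<in> J" "t \<in> J"
  shows "{s..t} \<subseteq> J"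
proof
  fix x assume x: "x \<in> {s..t}"
  have H: "\<forall>a\<in>J. \<forall>b\<in>J. \<forall>x. a \<le> x \<and> x \<le> b \<longrightarrow> x \<in> J" using J by (simp only: is_interval_1)
  have "s \<le> x \<and> x \<le> t" using x by simp
  then show "x \<in> J" using H[rule_format, OF assms(2) assms(3)] by simp
qed

lemma interior_sub':
  assumes "{s..t} \<subseteq> (J::real set)" "s < x" "x < t"
  shows "x \<in> interior J"
proof -
  have s: "{s<..<t} \<subseteq> J" using assms(1) by (meson greaterThanLessThan_subseteq_atLeastAtMost_iff order_refl order_trans)
  have "{s<..<t} \<subseteq> interior J" by (rule interior_maximal[OF s open_greaterThanLessThan])
  then show ?thesis using assms(2,3) by (simp add: subset_iff)
qed

lemma Gneg:
  assumes set: "standing_setting lam a R \<rho> r" and small: "normR a R \<rho> r * \<rho> ^ a < 1"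
    and delta: "0 < \<delta>" "\<delta> < arccos (normR a R \<rho> r * \<rho> ^ a)"
    and th: "cmod \<theta> = 1" "\<bar>Arg (\<theta> / (- lam / of_real (cmod lam)))\<bar> < \<delta>"
    and z: "Re z < ln \<rho>" and v: "Re v < ln r"
  shows "Re (\<theta> / lam * (1 + R (exp z) (exp v))) < 0"
proof -
  have lam0: "lam \<noteq> 0" using set by (simp add: standing_setting_def)
  define \<kappa> where "\<kappa> = normR a R \<rho> r * \<rho> ^ a"
  have \<kappa>0: "0 \<le> \<kappa>" using normR_nonneg[OF set] set by (simp add: \<kappa>_def standing_setting_def)
  define vt where "vt = - lam / of_real (cmod lam)"
  define u where "u = \<theta> / vt"
  have vt1: "cmod vt = 1" using lam0 by (simp add: vt_def norm_divide)
  have u1: "cmod u = 1" using th vt1 by (simp add: u_def norm_divide)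
  then have u0: "u \<noteq> 0" by auto
  have thl: "\<theta> / lam = - u / of_real (cmod lam)"
    using lam0 unfolding u_def vt_def by (simp add: field_simps)
  have "cis (Arg u) = u" using cis_Arg[OF u0] u1 by (simp add: sgn_div_norm)
  then have Reu: "Re u = cos (Arg u)" by (metis cis.sel(1))
  have Arg: "\<bar>Arg u\<bar> < \<delta>" using th(2) by (simp add: u_def vt_def)
  have "-1 \<le> \<kappa>" "\<kappa> \<le> 1" using \<kappa>0 small by (auto simp: \<kappa>_def)
  then have acpi: "arccos \<kappa> \<le> pi" using arccos_bounded[of \<kappa>] by simp
  have "cos \<delta> < cos \<bar>Arg u\<bar>"
    using Arg delta acpi by (intro cos_monotone_0_pi) (auto simp: \<kappa>_def)
  moreover have "cos (arccos \<kappa>) < cos \<delta>"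
    using delta acpi by (intro cos_monotone_0_pi) (auto simp: \<kappa>_def)
  moreover have "cos (arccos \<kappa>) = \<kappa>" using \<kappa>0 small by (simp add: \<kappa>_def)
  ultimately have Reu': "\<kappa> < Re u" using Reu by simp
  define Rv where "Rv = R (exp z) (exp v)"
  have Rb: "cmod Rv \<le> \<kappa>" using exp_bound2[OF set z v] by (simp add: Rv_def \<kappa>_def)
  have "- Re (u * Rv) \<le> cmod (u * Rv)" using abs_Re_le_cmod[of "u * Rv"] by linarith
  also have "\<dots> = cmod Rv" using u1 by (simp add: norm_mult)
  finally have "0 < Re u + Re (u * Rv)" using Rb Reu' by linarith
  moreover have "Re (\<theta> / lam * (1 + Rv)) = - (Re u + Re (u * Rv)) / cmod lam"
    unfolding thl using lam0 by (simp add: algebra_simps Re_divide_of_real) (simp add: field_simps)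
  moreover have "0 < cmod lam" using lam0 by simp
  ultimately show ?thesis by (simp add: Rv_def divide_neg_pos)
qed



lemma part1:
  assumes set: "standing_setting lam a R \<rho> r" and small: "normR a R \<rho> r * \<rho> ^ a < 1"
    and delta: "0 < \<delta>" "\<delta> < arccos (normR a R \<rho> r * \<rho> ^ a)"
    and p0: "(z0, w0) \<in> Utilde \<rho> r"
  shows "stability_beam lam R \<rho> r z0 w0 (- lam / of_real (cmod lam)) \<delta>"
  unfolding stability_beam_def Let_def
proof (intro allI impI, rule conjI)
  fix \<theta> assume th': "cmod \<theta> = 1 \<and> \<bar>Arg (\<theta> / (- lam / of_real (cmod lam)))\<bar> < \<delta>"
  then have th: "cmod \<theta> = 1" "\<bar>Arg (\<theta> / (- lam / of_real (cmod lam)))\<bar> < \<delta>" by auto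
  have lam0: "lam \<noteq> 0" using set by (simp add: standing_setting_def)
  define I where "I = {t::real. 0 \<le> t \<and> Re (z0 + of_real t * \<theta>) < ln \<rho>}"
  define G where "G s v = \<theta> / lam * (1 + R (exp (z0 + of_real s * \<theta>)) (exp v))" for s v
  have GN: "Re (G s v) < 0" if "Re (z0 + of_real s * \<theta>) < ln \<rho>" "Re v < ln r" for s v
    unfolding G_def by (rule Gneg[OF set small delta th that])
  have z0: "Re z0 < ln \<rho>" and w0: "Re w0 < ln r" using p0 by (auto simp: Utilde_def)
  show "\<exists>w. is_lift lam R \<rho> r z0 w0 \<theta> {t. 0 \<le> t \<and> Re (z0 + of_real t * \<theta>) < ln \<rho>} w"
  proof -
    have I0: "I \<subseteq> {0..}" by (auto simp: I_def)
    have Iopen: "\<exists>\<eta>>0. \<forall>s. 0 \<le> s \<and> \<bar>s - t\<bar> < \<eta> \<longrightarrow> s \<in> I" if t: "t \<in> I" for t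
    proof -
      define d where "d = ln \<rho> - Re (z0 + of_real t * \<theta>)"
      have d: "0 < d" using t by (simp add: I_def d_def)
      define \<eta> where "\<eta> = d / (\<bar>Re \<theta>\<bar> + 1)"
      have \<eta>: "0 < \<eta>" using d by (simp add: \<eta>_def)
      show ?thesis
      proof (intro exI[of _ \<eta>] conjI allI impI \<eta>)
        fix s assume s: "0 \<le> s \<and> \<bar>s - t\<bar> < \<eta>"
        have "\<bar>s - t\<bar> * \<bar>Re \<theta>\<bar> \<le> \<bar>s - t\<bar> * (\<bar>Re \<theta>\<bar> + 1)" by (simp add: mult_left_mono)
        also have "\<dots> < \<eta> * (\<bar>Re \<theta>\<bar> + 1)" using s by (intro mult_strict_right_mono) auto
        also have "\<dots> = d" by (simp add: \<eta>_def)
        finally have "\<bar>(s - t) * Re \<theta>\<bar> < d" by (simp add: abs_mult)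
        then have "(s - t) * Re \<theta> < d" by linarith
        then show "s \<in> I" using s by (simp add: I_def d_def algebra_simps)
      qed
    qed
    have bnd: "norm (G s v) \<le> 2 / cmod lam" if "s \<in> I" "Re v < ln r" for s v
    proof -
      have z: "Re (z0 + of_real s * \<theta>) < ln \<rho>" using that by (simp add: I_def)
      have Rb: "cmod (R (exp (z0 + of_real s * \<theta>)) (exp v)) \<le> 1"
        using exp_bound2[OF set z that(2)] small by linarith
      have "norm (G s v) = cmod (1 + R (exp (z0 + of_real s * \<theta>)) (exp v)) / cmod lam"
        using th by (simp add: G_def norm_mult norm_divide)
      also have "\<dots> \<le> (1 + 1) / cmod lam"
        using Rb norm_triangle_ineq[of 1 "R (exp (z0 + of_real s * \<theta>)) (exp v)"]
        by (intro divide_right_mono) auto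
      finally show ?thesis by simp
    qed
    have neg: "Re (G s v) \<le> 0" if "s \<in> I" "Re v < ln r" for s v
      using GN[of s v] that by (simp add: I_def)
    have cont: "isCont (\<lambda>p. G (fst p) (snd p)) (s, v)" if "s \<in> I" "Re v < ln r" for s v
    proof -
      have z: "Re (z0 + of_real s * \<theta>) < ln \<rho>" using that by (simp add: I_def)
      define \<Phi> where "\<Phi> p = (exp (z0 + of_real (fst p) * \<theta>), exp (snd p :: complex))" for p :: "real \<times> complex"
      have c\<Phi>: "isCont \<Phi> (s, v)" unfolding \<Phi>_def by (intro continuous_intros)
      have cR: "isCont (\<lambda>q. R (fst q) (snd q)) (\<Phi> (s, v))"
        using R_cont[OF set exp_bound(2)[OF set z that(2)]] by (simp add: \<Phi>_def)
      have c1: "isCont (\<lambda>p. R (fst (\<Phi> p)) (snd (\<Phi> p))) (s, v)" using isCont_o2[OF c\<Phi> cR] by simp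
      have "isCont (\<lambda>p. \<theta> / lam * (1 + R (fst (\<Phi> p)) (snd (\<Phi> p)))) (s, v)"
        by (intro continuous_mult continuous_add continuous_const c1)
      then show ?thesis by (simp add: G_def \<Phi>_def)
    qed
    obtain w where w: "w 0 = w0" "\<And>t. t \<in> I \<Longrightarrow> Re (w t) \<le> Re w0 \<and> (w has_vector_derivative G t (w t)) (at t within I)"
      using peano[OF I0 Iopen w0 bnd neg cont] by auto
    have "is_lift lam R \<rho> r z0 w0 \<theta> I w"
      unfolding is_lift_def
    proof (intro conjI ballI)
      show "0 \<in> I" using z0 by (simp add: I_def)
      show "w 0 = w0" by (rule w(1))
      fix t assume t: "t \<in> I"
      show "(z0 + of_real t * \<theta>, w t) \<in> Utilde \<rho> r" using t w(2)[OF t] w0 by (simp add: I_def Utilde_def)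
      show "(w has_vector_derivative \<theta> / lam * (1 + R (exp (z0 + of_real t * \<theta>)) (exp (w t)))) (at t within I)"
        using w(2)[OF t] by (simp add: G_def)
    qed
    then show ?thesis unfolding I_def by blast
  qed
next
  fix \<theta> assume th': "cmod \<theta> = 1 \<and> \<bar>Arg (\<theta> / (- lam / of_real (cmod lam)))\<bar> < \<delta>"
  then have th: "cmod \<theta> = 1" "\<bar>Arg (\<theta> / (- lam / of_real (cmod lam)))\<bar> < \<delta>" by auto
  show "\<forall>J w. is_interval J \<and> J \<subseteq> {t. 0 \<le> t \<and> Re (z0 + of_real t * \<theta>) < ln \<rho>} \<and> is_lift lam R \<rho> r z0 w0 \<theta> J w \<longrightarrow>
          (\<forall>s\<in>J. \<forall>t\<in>J. s < t \<longrightarrow> Re (w t) < Re (w s))"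
  proof (intro allI impI ballI)
    fix J w s t
    assume H: "is_interval J \<and> J \<subseteq> {t. 0 \<le> t \<and> Re (z0 + of_real t * \<theta>) < ln \<rho>} \<and> is_lift lam R \<rho> r z0 w0 \<theta> J w"
      and s: "s \<in> J" and t: "t \<in> J" and st: "s < t"
    have J: "is_interval J" and lift: "is_lift lam R \<rho> r z0 w0 \<theta> J w" using H by auto
    have sub: "{s..t} \<subseteq> J" by (rule interval_sub'[OF J s t])
    have wd: "(w has_vector_derivative \<theta> / lam * (1 + R (exp (z0 + of_real x * \<theta>)) (exp (w x)))) (at x within J)"
      and U: "(z0 + of_real x * \<theta>, w x) \<in> Utilde \<rho> r" if "x \<in> J" for x
      using lift that by (auto simp: is_lift_def)
    have cont: "continuous_on {s..t} (\<lambda>x. Re (w x))"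
    proof -
      have "continuous_on {s..t} w"
        unfolding continuous_on_eq_continuous_within
      proof
        fix x assume "x \<in> {s..t}"
        then have xJ: "x \<in> J" using subsetD[OF sub] by simp
        show "continuous (at x within {s..t}) w"
          by (rule continuous_within_subset[OF has_vector_derivative_continuous[OF wd[OF xJ]] sub])
      qed
      then show ?thesis by (intro continuous_intros)
    qed
    show "Re (w t) < Re (w s)"
    proof (rule DERIV_neg_imp_decreasing_open[OF st _ cont])
      fix x assume x: "s < x" "x < t"
      have xJ: "x \<in> J" using subsetD[OF sub, of x] x by simp
      have "(w has_vector_derivative \<theta> / lam * (1 + R (exp (z0 + of_real x * \<theta>)) (exp (w x)))) (at x)"
        using wd[OF xJ] at_within_interior[OF interior_sub'[OF sub x]] by simp
      then have "((\<lambda>x. Re (w x)) has_real_derivative Re (\<theta> / lam * (1 + R (exp (z0 + of_real x * \<theta>)) (exp (w x))))) (at x)"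
        by (rule has_field_derivative_Re)
      moreover have "Re (\<theta> / lam * (1 + R (exp (z0 + of_real x * \<theta>)) (exp (w x)))) < 0"
        using U[OF xJ] by (intro Gneg[OF set small delta th]) (auto simp: Utilde_def)
      ultimately show "\<exists>y. ((\<lambda>x. Re (w x)) has_real_derivative y) (at x) \<and> y < 0" by blast
    qed
  qed
qed

theorem mainTheorem10:
  fixes lam :: complex and a :: nat and R :: "complex \<Rightarrow> complex \<Rightarrow> complex"
    and \<rho> r \<delta> :: real
  assumes setting: "standing_setting lam a R \<rho> r"
    and small: "normR a R \<rho> r * \<rho> ^ a < 1"
    and delta: "0 < \<delta>" "\<delta> < arccos (normR a R \<rho> r * \<rho> ^ a)"
  shows "(\<forall>z0 w0. (z0, w0) \<in> Utilde \<rho> r \<longrightarrow>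
            stability_beam lam R \<rho> r z0 w0 (- lam / of_real (cmod lam)) \<delta>)
       \<and> (\<forall>z0 w0 \<theta> J w. cmod \<theta> = 1 \<and> is_interval J \<and> J \<subseteq> {0..} \<and>
            is_lift lam R \<rho> r z0 w0 \<theta> J w \<longrightarrow>
            (\<forall>t\<in>J.
              (Re \<theta> \<noteq> 0 \<longrightarrow>
                 cmod (w t - w0 - of_real t * \<theta> / lam)
                   \<le> exp (real a * Re z0) / (cmod lam * \<bar>Re \<theta>\<bar> * real a)
                       * normR a R \<rho> r * \<bar>1 - exp (real a * t * Re \<theta>)\<bar>) \<and>
              (Re \<theta> = 0 \<longrightarrow>
                 cmod (w t - w0 - of_real t * \<theta> / lam)
                   \<le> exp (real a * Re z0) / cmod lam * t * normR a R \<rho> r)))"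
proof (intro conjI allI impI)
  fix z0 w0 assume "(z0, w0) \<in> Utilde \<rho> r"
  then show "stability_beam lam R \<rho> r z0 w0 (- lam / of_real (cmod lam)) \<delta>"
    by (rule part1[OF setting small delta])
next
  fix z0 w0 \<theta> J w t
  assume H: "cmod \<theta> = 1 \<and> is_interval J \<and> J \<subseteq> {0..} \<and> is_lift lam R \<rho> r z0 w0 \<theta> J w"
  show "\<forall>t\<in>J.
              (Re \<theta> \<noteq> 0 \<longrightarrow>
                 cmod (w t - w0 - of_real t * \<theta> / lam)
                   \<le> exp (real a * Re z0) / (cmod lam * \<bar>Re \<theta>\<bar> * real a)
                       * normR a R \<rho> r * \<bar>1 - exp (real a * t * Re \<theta>)\<bar>) \<and>
              (Re \<theta> = 0 \<longrightarrow>
                 cmod (w t - w0 - of_real t * \<theta> / lam)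
                   \<le> exp (real a * Re z0) / cmod lam * t * normR a R \<rho> r)"
  proof
    fix t assume t: "t \<in> J"
    show "(Re \<theta> \<noteq> 0 \<longrightarrow>
                 cmod (w t - w0 - of_real t * \<theta> / lam)
                   \<le> exp (real a * Re z0) / (cmod lam * \<bar>Re \<theta>\<bar> * real a)
                       * normR a R \<rho> r * \<bar>1 - exp (real a * t * Re \<theta>)\<bar>) \<and>
              (Re \<theta> = 0 \<longrightarrow>
                 cmod (w t - w0 - of_real t * \<theta> / lam)
                   \<le> exp (real a * Re z0) / cmod lam * t * normR a R \<rho> r)"
      using part2[OF setting _ _ _ _ t] H by blast
  qed
qed

end
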